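(* Let $n\ge 2$, $p=n(n+1)$, let $\beta$ be as below, and define $$a(x)=\frac{p}{2}\Big(\big(\tfrac{1+x}{2}\big)^{p-1}+\beta(x)\big(\tfrac{1-x}{2}\big)^{p-1}\Big)\frac{1}{L_n'(x)},\qquad x\in[z_p,1).$$ Then $a$ is strictly decreasing on $[z_p,1)$ (and $a(x)L_n$ is tangent to $h_{\beta(x)^{1/p}}$ at $x$, with $a(x)\to1$ as $x\to1$).
   Context: $L_n(s)=\frac{1}{2^nn!}\frac{d^n}{ds^n}(s^2-1)^n$; $z_p$ is the largest zero of $L_n$ in $(-1,1)$; $\beta(x)=\frac{(1+x)^pL_n'(x)-p(1+x)^{p-1}L_n(x)}{(1-x)^pL_n'(x)+p(1-x)^{p-1}L_n(x)}$; $h_c(s)=\big(\frac{1+s}{2}\big)^p-c^p\big(\frac{1-s}{2}\big)^p$. *)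

theory Defs
  imports "HOL-Analysis.Analysis" "HOL-Computational_Algebra.Polynomial"
begin

text \<open>Legendre polynomial via Rodrigues' formula:
  L_n(s) = 1/(2^n n!) (d/ds)^n (s^2-1)^n.\<close>
definition legendre :: "nat \<Rightarrow> real poly" where
  "legendre n = smult (1 / (2 ^ n * fact n)) ((pderiv ^^ n) ([:-1, 0, 1:] ^ n))"

definition L :: "nat \<Rightarrow> real \<Rightarrow> real" where
  "L n s = poly (legendre n) s"

definition Ld :: "nat \<Rightarrow> real \<Rightarrow> real" where
  "Ld n s = poly (pderiv (legendre n)) s"

definition beta :: "nat \<Rightarrow> nat \<Rightarrow> real \<Rightarrow> real" where
  "beta p n x =
     ((1 + x) ^ p * Ld n x - real p * (1 + x) ^ (p - 1) * L n x) /
     ((1 - x) ^ p * Ld n x + real p * (1 - x) ^ (p - 1) * L n x)"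

definition hc :: "nat \<Rightarrow> real \<Rightarrow> real \<Rightarrow> real" where
  "hc p c s = ((1 + s) / 2) ^ p - c ^ p * ((1 - s) / 2) ^ p"

definition acoef :: "nat \<Rightarrow> nat \<Rightarrow> real \<Rightarrow> real" where
  "acoef p n x = real p / 2 *
     (((1 + x) / 2) ^ (p - 1) + beta p n x * ((1 - x) / 2) ^ (p - 1)) / Ld n x"

end

theory Submission
  imports Defs
begin

lemma rolle_gen:
  fixes f f' :: "real \<Rightarrow> real"
  assumes "a < b" "f a = 0" "f b = 0" "\<And>x. a \<le> x \<Longrightarrow> x \<le> b \<Longrightarrow> DERIV f x :> f' x"
  shows "\<exists>\<xi>. a < \<xi> \<and> \<xi> < b \<and> f' \<xi> = 0"
proof -
  have "continuous_on {a..b} f"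
    using assms(4) by (intro DERIV_atLeastAtMost_imp_continuous_on) auto
  moreover have "f differentiable (at x)" if "a < x" "x < b" for x
    using assms(4)[of x] that unfolding real_differentiable_def by auto
  ultimately obtain \<xi> where "a < \<xi>" "\<xi> < b" "DERIV f \<xi> :> 0"
    using Rolle[of a b f] assms by auto
  moreover have "DERIV f \<xi> :> f' \<xi>" using assms(4) \<open>a < \<xi>\<close> \<open>\<xi> < b\<close> by auto
  ultimately show ?thesis using DERIV_unique by blast
qed

lemma mono_chain:
  fixes t :: "nat \<Rightarrow> real"
  assumes "\<And>i. Suc i \<le> m \<Longrightarrow> t i < t (Suc i)" "i < j" "j \<le> m"
  shows "t i < t j"
  using assms(2,3)
proof (induction j)
  case 0 then show ?case by simp
next
  case (Suc j)
  show ?case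
  proof (cases "i = j")
    case True then show ?thesis using assms(1) Suc by simp
  next
    case False then have "t i < t j" using Suc by simp
    then show ?thesis using assms(1)[of j] Suc by simp
  qed
qed

lemma mono_chain_le:
  fixes t :: "nat \<Rightarrow> real"
  assumes "\<And>i. Suc i \<le> m \<Longrightarrow> t i < t (Suc i)" "i \<le> j" "j \<le> m"
  shows "t i \<le> t j"
  using mono_chain[of m t i j] assms by (cases "i = j") (auto simp: less_imp_le)

lemma rolle_chain:
  fixes f f' :: "real \<Rightarrow> real" and t :: "nat \<Rightarrow> real"
  assumes mono: "\<And>i. Suc i \<le> m \<Longrightarrow> t i < t (Suc i)"
    and zero: "\<And>i. i \<le> m \<Longrightarrow> f (t i) = 0"
    and der: "\<And>x. t 0 \<le> x \<Longrightarrow> x \<le> t m \<Longrightarrow> DERIV f x :> f' x"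
  shows "\<exists>s. \<forall>i<m. t i < s i \<and> s i < t (Suc i) \<and> f' (s i) = 0"
proof -
  have "\<forall>i. i < m \<longrightarrow> (\<exists>\<xi>. t i < \<xi> \<and> \<xi> < t (Suc i) \<and> f' \<xi> = 0)"
  proof (intro allI impI)
    fix i assume i: "i < m"
    have a: "t 0 \<le> t i" using mono_chain_le[of m t 0 i] mono i by simp
    have b: "t (Suc i) \<le> t m" using mono_chain_le[of m t "Suc i" m] mono i by simp
    show "\<exists>\<xi>. t i < \<xi> \<and> \<xi> < t (Suc i) \<and> f' \<xi> = 0"
    proof (rule rolle_gen[where a="t i" and b="t (Suc i)" and f=f and f'=f'])
      show "t i < t (Suc i)" using i mono by simp
      show "f (t i) = 0" "f (t (Suc i)) = 0" using i zero by auto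
      show "DERIV f x :> f' x" if "t i \<le> x" "x \<le> t (Suc i)" for x
        using that a b der by simp
    qed
  qed
  then show ?thesis by metis
qed

lemma all_roots:
  fixes q :: "real poly" and t :: "nat \<Rightarrow> real"
  assumes "q \<noteq> 0" "degree q \<le> m"
    and mono: "\<And>i. Suc i < m \<Longrightarrow> t i < t (Suc i)"
    and roots: "\<And>i. i < m \<Longrightarrow> poly q (t i) = 0"
    and x: "poly q x = 0"
  shows "\<exists>i<m. x = t i"
proof (rule ccontr)
  assume nx: "\<not> (\<exists>i<m. x = t i)"
  have mono': "\<And>i. Suc i \<le> m - 1 \<Longrightarrow> t i < t (Suc i)" using mono by simp
  have sm: "t i < t j" if "i < j" "j < m" for i j
    using mono_chain[of "m - 1" t i j] mono' that by simp
  have inj: "inj_on t {..<m}"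
  proof (rule inj_onI)
    fix i j assume "i \<in> {..<m}" "j \<in> {..<m}" "t i = t j"
    then show "i = j"
      using sm[of i j] sm[of j i] by (cases i j rule: linorder_cases) auto
  qed
  have sub: "insert x (t ` {..<m}) \<subseteq> {x. poly q x = 0}" using roots x by auto
  have c1: "card (insert x (t ` {..<m})) = Suc m"
    using nx inj by (subst card_insert_disjoint) (auto simp: card_image)
  have c2: "card (insert x (t ` {..<m})) \<le> card {x. poly q x = 0}"
    by (rule card_mono[OF poly_roots_finite[OF assms(1)] sub])
  have c3: "card {x. poly q x = 0} \<le> degree q" by (rule card_poly_roots_bound[OF assms(1)])
  show False using c1 c2 c3 assms(2) by simp
qed

lemma pos_beyond:
  fixes Q :: "real poly"
  assumes "lead_coeff Q > 0" "\<And>y. y \<ge> x \<Longrightarrow> poly Q y \<noteq> 0"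
  shows "poly Q x > 0"
proof (rule ccontr)
  assume "\<not> poly Q x > 0"
  then have le: "poly Q x < 0" using assms(2)[of x] by linarith
  obtain N where N: "\<forall>y\<ge>N. poly Q y \<ge> lead_coeff Q" using poly_pinfty_gt_lc[OF assms(1)] by blast
  define y where "y = max N (x + 1)"
  have "y \<ge> N" "x < y" unfolding y_def by auto
  have "poly Q y > 0" using N assms(1) \<open>y \<ge> N\<close> by fastforce
  then obtain r where "x < r" "poly Q r = 0" using poly_IVT_pos[of x y Q] le \<open>x < y\<close> by blast
  then show False using assms(2)[of r] by simp
qed

definition DD :: "nat \<Rightarrow> nat \<Rightarrow> real poly" where
  "DD n k = (pderiv ^^ k) ([:-1, 0, 1:] ^ n)"

lemma DD_Suc: "DD n (Suc k) = pderiv (DD n k)" by (simp add: DD_def)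
lemma DD_0: "DD n 0 = [:-1, 0, 1:] ^ n" by (simp add: DD_def)

lemma DD_deg: "k \<le> 2 * n \<Longrightarrow> degree (DD n k) = 2 * n - k \<and> coeff (DD n k) (2 * n - k) > 0"
proof (induction k)
  case 0
  have d: "degree ([:-1, 0, 1:] ^ n :: real poly) = 2 * n"
    by (subst degree_power_eq) auto
  have "coeff ([:-1, 0, 1:] ^ n :: real poly) (2 * n) = lead_coeff ([:-1, 0, 1:] ^ n :: real poly)"
    using d by simp
  also have "\<dots> = 1" by (simp add: lead_coeff_power)
  finally show ?case using d by (simp add: DD_0)
next
  case (Suc k)
  then have IH: "degree (DD n k) = 2 * n - k" "coeff (DD n k) (2 * n - k) > 0" by auto
  have e: "Suc (2 * n - Suc k) = 2 * n - k" using Suc.prems by simp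
  have "coeff (DD n (Suc k)) (2 * n - Suc k) = real (Suc (2 * n - Suc k)) * coeff (DD n k) (2 * n - k)"
    by (simp add: DD_Suc coeff_pderiv e del: of_nat_Suc)
  moreover have "degree (DD n (Suc k)) = 2 * n - Suc k"
    using IH by (simp add: DD_Suc degree_pderiv)
  ultimately show ?case using IH(2) by simp
qed

lemma DD_dvd: "k \<le> n \<Longrightarrow> [:-1, 0, 1:] ^ (n - k) dvd DD n k"
proof (induction k)
  case 0 then show ?case by (simp add: DD_0)
next
  case (Suc k)
  define q :: "real poly" where "q = [:-1, 0, 1:]"
  define m where "m = n - Suc k"
  have nk: "n - k = Suc m" using Suc.prems unfolding m_def by simp
  have "q ^ (n - k) dvd DD n k" using Suc unfolding q_def by simp
  then obtain w where w: "DD n k = q ^ Suc m * w" using nk by (auto elim: dvdE)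
  have "DD n (Suc k) = q ^ m * (q * pderiv w + w * smult (of_nat (Suc m)) (pderiv q))"
    unfolding DD_Suc w pderiv_mult pderiv_power_Suc by (simp add: algebra_simps power_Suc)
  then show ?case unfolding q_def m_def by simp
qed

lemma DD_at1: "k \<le> n \<Longrightarrow> \<exists>w. DD n k = [:-1, 1:] ^ (n - k) * w \<and> poly w 1 = fact n / fact (n - k) * 2 ^ n"
proof (induction k)
  case 0
  have e: "([:-1, 0, 1:] :: real poly) = [:-1, 1:] * [:1, 1:]" by simp
  have "DD n 0 = ([:-1, 1:] * [:1, 1:]) ^ n" by (simp only: DD_0 e)
  also have "\<dots> = [:-1, 1:] ^ n * [:1, 1:] ^ n" by (rule power_mult_distrib)
  finally have "DD n 0 = [:-1, 1:] ^ n * [:1, 1:] ^ n" .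
  then show ?case by (intro exI[of _ "[:1, 1:] ^ n"]) (simp add: poly_power)
next
  case (Suc k)
  define q :: "real poly" where "q = [:-1, 1:]"
  define m where "m = n - Suc k"
  have nk: "n - k = Suc m" using Suc.prems unfolding m_def by simp
  obtain w where w0: "DD n k = q ^ (n - k) * w"
      and w1: "poly w 1 = fact n / fact (n - k) * 2 ^ n"
    using Suc unfolding q_def by auto
  have w: "DD n k = q ^ Suc m * w" using w0 nk by simp
  define w' where "w' = q * pderiv w + smult (of_nat (Suc m)) w"
  have pq: "pderiv q = 1" unfolding q_def by (simp add: pderiv_pCons)
  have "DD n (Suc k) = q ^ m * w'"
    unfolding DD_Suc w pderiv_mult pderiv_power_Suc w'_def pq by (simp add: algebra_simps power_Suc)
  moreover have "poly w' 1 = fact n / fact m * 2 ^ n"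
  proof -
    have f: "fact (n - k) = real (Suc m) * fact m"
      using nk by simp
    have "poly q 1 = 0" unfolding q_def by simp
    then have "poly w' 1 = real (Suc m) * poly w 1" unfolding w'_def by simp
    also have "\<dots> = fact n / fact m * 2 ^ n" unfolding w1 f by simp
    finally show ?thesis .
  qed
  ultimately show ?case unfolding q_def m_def by blast
qed

lemma poly_zeroI: "(\<And>x. poly p x = 0) \<Longrightarrow> p = (0 :: real poly)"
  using poly_eq_poly_eq_iff[of p 0] by auto

lemma DD_ode:
  "[:-1, 0, 1:] * DD n (Suc k) + smult (2 * real k - 2 * real n) ([:0, 1:] * DD n k)
     + smult (real k * (real k - 1) - 2 * real n * real k) (DD n (k - 1)) = 0"
proof (induction k)
  case 0
  show ?case
  proof (cases n)
    case 0 then show ?thesis by (simp add: DD_Suc DD_0)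
  next
    case (Suc m)
    show ?thesis unfolding DD_Suc DD_0 Suc pderiv_power_Suc
      apply (rule poly_zeroI)
      apply (simp add: pderiv_pCons poly_power algebra_simps)
      done
  qed
next
  case (Suc k)
  have "pderiv ([:-1, 0, 1:] * DD n (Suc k) + smult (2 * real k - 2 * real n) ([:0, 1:] * DD n k)
     + smult (real k * (real k - 1) - 2 * real n * real k) (DD n (k - 1))) = 0"
    using Suc.IH by simp
  then have hx: "poly (pderiv ([:-1, 0, 1:] * DD n (Suc k) + smult (2 * real k - 2 * real n) ([:0, 1:] * DD n k)
     + smult (real k * (real k - 1) - 2 * real n * real k) (DD n (k - 1)))) x = 0" for x
    by simp
  show ?case
  proof (rule poly_zeroI)
    fix x
    show "poly ([:-1, 0, 1:] * DD n (Suc (Suc k)) + smult (2 * real (Suc k) - 2 * real n) ([:0, 1:] * DD n (Suc k))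
     + smult (real (Suc k) * (real (Suc k) - 1) - 2 * real n * real (Suc k)) (DD n (Suc k - 1))) x = 0"
      using hx[of x]
      by (cases k) (simp_all add: pderiv_add pderiv_diff pderiv_minus pderiv_mult pderiv_smult pderiv_pCons DD_Suc[symmetric] algebra_simps)
  qed
qed



lemma DD_vanish:
  assumes "k < n"
  shows "poly (DD n k) 1 = 0" "poly (DD n k) (-1) = 0"
proof -
  have "[:-1, 0, 1:] dvd ([:-1, 0, 1:] :: real poly) ^ (n - k)" using assms by simp
  then have "[:-1, 0, 1:] dvd DD n k" using DD_dvd[of k n] assms dvd_trans by auto
  then obtain r where r: "DD n k = [:-1, 0, 1:] * r" by (auto elim: dvdE)
  show "poly (DD n k) 1 = 0" "poly (DD n k) (-1) = 0" unfolding r by simp_all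
qed

lemma DD_roots:
  "k \<le> n \<Longrightarrow> \<exists>t. (\<forall>i<k. -1 < t i \<and> t i < 1 \<and> poly (DD n k) (t i) = 0)
                   \<and> (\<forall>i. Suc i < k \<longrightarrow> t i < t (Suc i))"
proof (induction k)
  case 0 then show ?case by auto
next
  case (Suc k)
  then obtain t where t1: "\<And>i. i < k \<Longrightarrow> -1 < t i \<and> t i < 1 \<and> poly (DD n k) (t i) = 0"
      and t2: "\<And>i. Suc i < k \<Longrightarrow> t i < t (Suc i)" by auto
  have kn: "k < n" using Suc.prems by simp
  define T where "T i = (if i = 0 then -1 else if i \<le> k then t (i - 1) else 1)" for i
  have Tmono: "T i < T (Suc i)" if "Suc i \<le> Suc k" for i
  proof (cases "i = 0")
    case True then show ?thesis using t1[of 0] by (auto simp: T_def)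
  next
    case False
    then obtain j where j: "i = Suc j" by (cases i) auto
    show ?thesis
    proof (cases "Suc i \<le> k")
      case True then show ?thesis using t2[of j] j by (auto simp: T_def)
    next
      case False then show ?thesis using t1[of j] j that by (auto simp: T_def)
    qed
  qed
  have Tzero: "poly (DD n k) (T i) = 0" if "i \<le> Suc k" for i
    using t1[of "i - 1"] DD_vanish[OF kn] that by (auto simp: T_def)
  have Tder: "DERIV (\<lambda>x. poly (DD n k) x) x :> poly (DD n (Suc k)) x" for x
    by (simp add: DD_Suc)
  obtain s where s: "\<forall>i<Suc k. T i < s i \<and> s i < T (Suc i) \<and> poly (DD n (Suc k)) (s i) = 0"
    using rolle_chain[where m="Suc k" and t=T and f="\<lambda>x. poly (DD n k) x" and f'="\<lambda>x. poly (DD n (Suc k)) x"]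
      Tmono Tzero Tder by blast
  have T0: "T 0 = -1" and Tk: "T (Suc k) = 1" by (auto simp: T_def)
  show ?case
  proof (intro exI[of _ s] conjI allI impI)
    fix i assume i: "i < Suc k"
    have "T 0 \<le> T i" using mono_chain_le[of "Suc k" T 0 i] Tmono i by simp
    moreover have "T (Suc i) \<le> T (Suc k)" using mono_chain_le[of "Suc k" T "Suc i" "Suc k"] Tmono i by simp
    ultimately show "-1 < s i" "s i < 1" "poly (DD n (Suc k)) (s i) = 0" using s i T0 Tk by force+
  next
    fix i assume i: "Suc i < Suc k"
    have "s i < T (Suc i)" using s i by simp
    moreover have "T (Suc i) < s (Suc i)" using s i by simp
    ultimately show "s i < s (Suc i)" by simp
  qed
qed



lemma legendre_DD: "legendre n = smult (1 / (2 ^ n * fact n)) (DD n n)"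
  by (simp add: legendre_def DD_def)

lemma L_DD: "L n x = (1 / (2 ^ n * fact n)) * poly (DD n n) x"
  by (simp add: L_def legendre_DD)

lemma Ld_DD: "Ld n x = (1 / (2 ^ n * fact n)) * poly (DD n (Suc n)) x"
  by (simp add: Ld_def legendre_DD pderiv_smult DD_Suc)

lemma L2_DD: "poly (pderiv (pderiv (legendre n))) x = (1 / (2 ^ n * fact n)) * poly (DD n (Suc (Suc n))) x"
  by (simp add: legendre_DD pderiv_smult DD_Suc)

lemma DD_ode_pt:
  "(x^2 - 1) * poly (DD n (Suc (Suc n))) x + 2 * x * poly (DD n (Suc n)) x
     - real (n * (n + 1)) * poly (DD n n) x = 0"
proof -
  have "poly ([:-1, 0, 1:] * DD n (Suc (Suc n)) + smult (2 * real (Suc n) - 2 * real n) ([:0, 1:] * DD n (Suc n))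
     + smult (real (Suc n) * (real (Suc n) - 1) - 2 * real n * real (Suc n)) (DD n (Suc n - 1))) x = 0"
    using DD_ode[of n "Suc n"] by simp
  then show ?thesis by (simp add: algebra_simps power2_eq_square)
qed

lemma legendre_ode:
  "(x^2 - 1) * poly (pderiv (pderiv (legendre n))) x + 2 * x * Ld n x - real (n * (n + 1)) * L n x = 0"
proof -
  define c :: real where "c = 1 / (2 ^ n * fact n)"
  define A where "A = poly (DD n (Suc (Suc n))) x"
  define B where "B = poly (DD n (Suc n)) x"
  define C where "C = poly (DD n n) x"
  have e: "(x^2 - 1) * (c * A) + 2 * x * (c * B) - real (n * (n + 1)) * (c * C)
      = c * ((x^2 - 1) * A + 2 * x * B - real (n * (n + 1)) * C)" by (simp only: algebra_simps)
  have "(x^2 - 1) * A + 2 * x * B - real (n * (n + 1)) * C = 0" unfolding A_def B_def C_def by (rule DD_ode_pt)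
  then show ?thesis unfolding L_DD Ld_DD L2_DD c_def[symmetric] A_def[symmetric] B_def[symmetric] C_def[symmetric] e
    by simp
qed

lemma legendre_one: "L n 1 = 1"
proof -
  obtain w where "DD n n = [:-1, 1:] ^ (n - n) * w" "poly w 1 = fact n / fact (n - n) * 2 ^ n"
    using DD_at1[of n n] by auto
  then have "poly (DD n n) 1 = fact n * 2 ^ n" by simp
  then show ?thesis unfolding L_DD by simp
qed

lemma DD_lead: "k \<le> 2 * n \<Longrightarrow> lead_coeff (DD n k) > 0 \<and> DD n k \<noteq> 0"
  using DD_deg[of k n] by auto



lemma legendre_facts:
  fixes n :: nat and z :: real
  assumes n2: "n \<ge> 2"
    and z_zero: "L n z = 0" and z_range: "-1 < z \<and> z < 1"
    and z_largest: "\<forall>y. -1 < y \<and> y < 1 \<and> L n y = 0 \<longrightarrow> y \<le> z"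
  shows "(\<forall>x>z. L n x > 0) \<and> (\<forall>x\<ge>z. Ld n x > 0)
     \<and> (\<forall>x\<ge>z. poly (pderiv (pderiv (legendre n))) x > 0)
     \<and> (\<forall>x. z \<le> x \<and> x < 1 \<longrightarrow> (1 + x) * Ld n x - real (n * (n + 1)) * L n x > 0)"
proof -
  define c :: real where "c = 1 / (2 ^ n * fact n)"
  have c0: "c > 0" unfolding c_def by simp
  define D0 where "D0 = DD n n"
  define D1 where "D1 = DD n (Suc n)"
  define D2 where "D2 = DD n (Suc (Suc n))"
  have LD0: "L n x = c * poly D0 x" for x unfolding L_DD c_def D0_def by simp
  have LD1: "Ld n x = c * poly D1 x" for x unfolding Ld_DD c_def D1_def by simp
  have LD2: "poly (pderiv (pderiv (legendre n))) x = c * poly D2 x" for x unfolding L2_DD c_def D2_def by simp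
  have dD0: "degree D0 = n" "coeff D0 n > 0" "lead_coeff D0 > 0" "D0 \<noteq> 0"
    using DD_deg[of n n] unfolding D0_def by auto
  have dD1: "degree D1 = n - 1" "lead_coeff D1 > 0" "D1 \<noteq> 0"
    using DD_deg[of "Suc n" n] n2 unfolding D1_def by auto
  have dD2: "degree D2 = n - 2" "lead_coeff D2 > 0" "D2 \<noteq> 0"
    using DD_deg[of "Suc (Suc n)" n] n2 unfolding D2_def by auto
  have D1der: "DERIV (\<lambda>x. poly D0 x) x :> poly D1 x" for x
    unfolding D0_def D1_def by (simp add: DD_Suc)
  have D2der: "DERIV (\<lambda>x. poly D1 x) x :> poly D2 x" for x
    unfolding D2_def D1_def by (simp add: DD_Suc)
  have D0z: "poly D0 z = 0" using z_zero c0 LD0[of z] by simp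

  obtain t where t1: "\<And>i. i < n \<Longrightarrow> -1 < t i \<and> t i < 1 \<and> poly D0 (t i) = 0"
      and t2: "\<And>i. Suc i < n \<Longrightarrow> t i < t (Suc i)"
    using DD_roots[of n n] unfolding D0_def by auto
  have t2': "\<And>i. Suc i \<le> n - 1 \<Longrightarrow> t i < t (Suc i)" using t2 by simp
  have tz: "t (n - 1) \<le> z" using z_largest t1[of "n - 1"] n2 LD0[of "t (n - 1)"] by auto
  have tle: "t i \<le> z" if "i < n" for i
  proof -
    have "i \<le> n - 1" using that by arith
    then show ?thesis using mono_chain_le[of "n - 1" t i "n - 1"] t2' tz by simp
  qed
  have D0roots: "x \<le> z" if hx: "poly D0 x = 0" for x
  proof -
    obtain i where "i < n" "x = t i"
      using all_roots[of D0 n t x] dD0 t1 t2 hx by auto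
    then show ?thesis using tle by simp
  qed

  obtain s where s: "\<forall>i<n - 1. t i < s i \<and> s i < t (Suc i) \<and> poly D1 (s i) = 0"
  proof -
    have "\<exists>s. \<forall>i<n - 1. t i < s i \<and> s i < t (Suc i) \<and> poly D1 (s i) = 0"
    proof (rule rolle_chain[where m="n - 1" and t=t and f="\<lambda>x. poly D0 x" and f'="\<lambda>x. poly D1 x"])
      show "t i < t (Suc i)" if "Suc i \<le> n - 1" for i using t2' that by simp
      show "poly D0 (t i) = 0" if "i \<le> n - 1" for i
      proof -
        have "i < n" using that n2 by arith
        then show ?thesis using t1 by simp
      qed
      show "DERIV (\<lambda>x. poly D0 x) x :> poly D1 x" for x by (rule D1der)
    qed
    then show ?thesis using that by blast
  qed
  have s2: "s i < s (Suc i)" if "Suc i < n - 1" for i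
  proof -
    have "s i < t (Suc i)" using s that by simp
    moreover have "t (Suc i) < s (Suc i)" using s that by simp
    ultimately show ?thesis by simp
  qed
  have sz: "s i < z" if "i < n - 1" for i
  proof -
    have "s i < t (Suc i)" using s that by simp
    moreover have "t (Suc i) \<le> z" using tle that by simp
    ultimately show ?thesis by simp
  qed
  have D1roots: "x < z" if hx: "poly D1 x = 0" for x
  proof -
    obtain i where "i < n - 1" "x = s i"
      using all_roots[of D1 "n - 1" s x] dD1 s s2 hx by auto
    then show ?thesis using sz by simp
  qed

  obtain r where r: "\<forall>i<n - 2. s i < r i \<and> r i < s (Suc i) \<and> poly D2 (r i) = 0"
  proof -
    have "\<exists>r. \<forall>i<n - 2. s i < r i \<and> r i < s (Suc i) \<and> poly D2 (r i) = 0"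
    proof (rule rolle_chain[where m="n - 2" and t=s and f="\<lambda>x. poly D1 x" and f'="\<lambda>x. poly D2 x"])
      show "s i < s (Suc i)" if "Suc i \<le> n - 2" for i using s2 that by simp
      show "poly D1 (s i) = 0" if "i \<le> n - 2" for i using s that n2 by simp
      show "DERIV (\<lambda>x. poly D1 x) x :> poly D2 x" for x by (rule D2der)
    qed
    then show ?thesis using that by blast
  qed
  have D2roots: "x < z" if hx: "poly D2 x = 0" for x
  proof -
    have r2: "r i < r (Suc i)" if "Suc i < n - 2" for i
    proof -
      have "r i < s (Suc i)" using r that by simp
      moreover have "s (Suc i) < r (Suc i)" using r that by simp
      ultimately show ?thesis by simp
    qed
    obtain i where "i < n - 2" "x = r i"
      using all_roots[of D2 "n - 2" r x] dD2 r r2 hx by auto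
    moreover have "r i < s (Suc i)" using r \<open>i < n - 2\<close> by simp
    moreover have "s (Suc i) < z" using sz \<open>i < n - 2\<close> by simp
    ultimately show ?thesis by simp
  qed

  have P0: "poly D0 x > 0" if "x > z" for x
    using pos_beyond[of D0 x] dD0 D0roots that by force
  have P1: "poly D1 x > 0" if "x \<ge> z" for x
    using pos_beyond[of D1 x] dD1 D1roots that by force
  have P2: "poly D2 x > 0" if "x \<ge> z" for x
    using pos_beyond[of D2 x] dD2 D2roots that by force

  define p :: nat where "p = n * (n + 1)"
  have p1: "p \<ge> 1" unfolding p_def using n2 by simp
  define G where "G = pCons 0 D1 + D1 - smult (real p) D0"
  have polyG: "poly G x = (1 + x) * poly D1 x - real p * poly D0 x" for x
    unfolding G_def by (simp add: algebra_simps)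
  have G1: "poly G 1 = 0"
    using DD_ode_pt[of 1 n] unfolding polyG D0_def D1_def p_def by simp
  have cD1: "coeff D1 (n - 1) = real n * coeff D0 n"
  proof -
    have "coeff D1 (n - 1) = real (Suc (n - 1)) * coeff D0 (Suc (n - 1))"
      unfolding D1_def D0_def DD_Suc coeff_pderiv by simp
    then show ?thesis using n2 by simp
  qed
  have cG: "coeff G n = (real n - real p) * coeff D0 n"
  proof -
    have "coeff D1 n = 0" using dD1 n2 by (intro coeff_eq_0) simp
    moreover have "coeff (pCons 0 D1) n = coeff D1 (n - 1)" using n2 by (cases n) auto
    ultimately show ?thesis unfolding G_def using cD1 by (simp add: algebra_simps)
  qed
  have Gnz: "G \<noteq> 0"
  proof
    assume "G = 0"
    then have "(real n - real p) * coeff D0 n = 0" using cG by simp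
    moreover have "real n < real p" unfolding p_def using n2 by simp
    ultimately show False using dD0 by simp
  qed
  have degG: "degree G \<le> n"
  proof (rule degree_le, intro allI impI)
    fix i assume i: "n < i"
    have "coeff D1 i = 0" using dD1 i by (intro coeff_eq_0) simp
    moreover have "coeff D0 i = 0" using dD0 i by (intro coeff_eq_0) simp
    moreover have "coeff (pCons 0 D1) i = 0"
    proof -
      obtain j where j: "i = Suc j" using i by (cases i) auto
      have "coeff D1 j = 0" using dD1 i j n2 by (intro coeff_eq_0) simp
      then show ?thesis using j by simp
    qed
    ultimately show "coeff G i = 0" unfolding G_def by simp
  qed
  define f where "f x = poly D0 x / (1 + x) ^ p" for x
  define f' where "f' x = (poly D1 x * (1 + x) ^ p - poly D0 x * (real p * (1 + x) ^ (p - 1)))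
      / ((1 + x) ^ p * (1 + x) ^ p)" for x
  have fder: "DERIV f x :> f' x" if "x > -1" for x
  proof -
    have "DERIV (\<lambda>x. (1 + x) ^ p) x :> real p * (1 + x) ^ (p - 1)"
      by (auto intro!: derivative_eq_intros)
    moreover have "(1 + x) ^ p \<noteq> 0" using that by simp
    ultimately show ?thesis unfolding f_def f'_def
      by (intro DERIV_divide[OF D1der]) auto
  qed
  have f'0: "poly G x = 0" if "x > -1" "f' x = 0" for x
  proof -
    have pos: "(1 + x) ^ (p - 1) > 0" using that by simp
    have pe: "(1 + x) ^ p = (1 + x) * (1 + x) ^ (p - 1)" using p1 by (cases p) auto
    have "poly D1 x * (1 + x) ^ p - poly D0 x * (real p * (1 + x) ^ (p - 1)) = 0"
      using that(2) that(1) unfolding f'_def by simp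
    then have "(1 + x) ^ (p - 1) * poly G x = 0" unfolding polyG pe by (simp add: algebra_simps)
    then show ?thesis using pos that(1) by auto
  qed
  obtain q where q: "\<forall>i<n - 1. t i < q i \<and> q i < t (Suc i) \<and> f' (q i) = 0"
  proof -
    have "\<exists>q. \<forall>i<n - 1. t i < q i \<and> q i < t (Suc i) \<and> f' (q i) = 0"
    proof (rule rolle_chain[where m="n - 1" and t=t and f=f and f'=f'])
      show "t i < t (Suc i)" if "Suc i \<le> n - 1" for i using t2' that by simp
      show "f (t i) = 0" if "i \<le> n - 1" for i
      proof -
        have "i < n" using that n2 by arith
        then show ?thesis unfolding f_def using t1 by simp
      qed
      show "DERIV f x :> f' x" if "t 0 \<le> x" "x \<le> t (n - 1)" for x
        using fder t1[of 0] that n2 by simp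
    qed
    then show ?thesis using that by blast
  qed
  define Q where "Q i = (if i < n - 1 then q i else 1)" for i
  have Qroots: "poly G (Q i) = 0" if "i < n" for i
  proof (cases "i < n - 1")
    case True
    then have "-1 < t i" using t1 by simp
    then have "q i > -1" using q True by force
    then show ?thesis using f'0 q True unfolding Q_def by simp
  next
    case False then show ?thesis unfolding Q_def using G1 by simp
  qed
  have Qmono: "Q i < Q (Suc i)" if "Suc i < n" for i
  proof -
    have "q i < t (Suc i)" using q that by simp
    moreover have "t (Suc i) < 1" using t1 that by simp
    moreover have "Suc i < n - 1 \<Longrightarrow> t (Suc i) < q (Suc i)" using q by simp
    ultimately show ?thesis unfolding Q_def using that by auto
  qed
  have Gnz2: "poly G x \<noteq> 0" if "z \<le> x" "x < 1" for x
  proof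
    assume "poly G x = 0"
    then obtain i where i: "i < n" "x = Q i"
      using all_roots[of G n Q x] Gnz degG Qmono Qroots by auto
    show False
    proof (cases "i < n - 1")
      case True
      then have "x < t (Suc i)" using q i unfolding Q_def by simp
      moreover have "t (Suc i) \<le> z" using tle True by simp
      ultimately show False using that by simp
    next
      case False then show False using i that unfolding Q_def by simp
    qed
  qed
  have Gz: "poly G z > 0" unfolding polyG using D0z P1[of z] z_range by simp
  have Gpos: "poly G x > 0" if "z \<le> x" "x < 1" for x
  proof (rule ccontr)
    assume "\<not> poly G x > 0"
    then have neg: "poly G x < 0" using Gnz2[OF that] by linarith
    then have "z < x" using Gz that by (cases "z = x") auto
    then obtain y where "z < y" "y < x" "poly G y = 0" using poly_IVT_neg[of z x G] Gz neg by blast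
    then show False using Gnz2[of y] that by simp
  qed
  show ?thesis
  proof (intro conjI allI impI)
    fix x :: real assume "x > z" then show "L n x > 0" using P0 c0 LD0 by simp
  next
    fix x :: real assume "x \<ge> z" then show "Ld n x > 0" using P1 c0 LD1 by simp
  next
    fix x :: real assume "x \<ge> z" then show "poly (pderiv (pderiv (legendre n))) x > 0" using P2 c0 LD2 by simp
  next
    fix x :: real assume "z \<le> x \<and> x < 1"
    then have "c * poly G x > 0" using Gpos c0 by simp
    then show "(1 + x) * Ld n x - real (n * (n + 1)) * L n x > 0"
      unfolding LD0 LD1 polyG p_def by (simp add: algebra_simps)
  qed
qed



lemma alg1:
  fixes P K a1 b1 x l d D :: real
  assumes "K \<noteq> 0" "b1 \<noteq> 0" "d \<noteq> 0" and D: "D = (1 - x) * d + P * l" "D \<noteq> 0"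
  shows "P / 2 * (a1 / K + ((1 + x) * a1 * d - P * a1 * l) / ((1 - x) * b1 * d + P * b1 * l) * (b1 / K)) / d
       = P * (a1 / K) / D"
proof -
  have e1: "(1 + x) * a1 * d - P * a1 * l = a1 * (2 * d - D)" unfolding D(1) by (simp add: algebra_simps)
  have e2: "(1 - x) * b1 * d + P * b1 * l = b1 * D" unfolding D(1) by (simp add: algebra_simps)
  have e3: "a1 * (2 * d - D) / (b1 * D) * (b1 / K) = a1 * (2 * d - D) / (D * K)" using assms by simp
  have e4: "a1 / K + a1 * (2 * d - D) / (D * K) = 2 * a1 * d / (D * K)"
    using assms(1,2,3) D(2) by (simp add: field_simps)
  show ?thesis unfolding e1 e2 e3 e4 using assms by (simp add: field_simps)
qed

lemma alg2:
  fixes P K a1 b1 x l d D :: real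
  assumes "K \<noteq> 0" "b1 \<noteq> 0" and D: "D = (1 - x) * d + P * l" "D \<noteq> 0"
  shows "(1 + x) * a1 / (2 * K) - ((1 + x) * a1 * d - P * a1 * l) / ((1 - x) * b1 * d + P * b1 * l) * ((1 - x) * b1 / (2 * K))
       = P * (a1 / K) / D * l"
proof -
  have e1: "(1 + x) * a1 * d - P * a1 * l = a1 * (2 * d - D)" unfolding D(1) by (simp add: algebra_simps)
  have e2: "(1 - x) * b1 * d + P * b1 * l = b1 * D" unfolding D(1) by (simp add: algebra_simps)
  have e3: "a1 * (2 * d - D) / (b1 * D) * ((1 - x) * b1 / (2 * K)) = a1 * (2 * d - D) * (1 - x) / (2 * D * K)"
    using assms(1,2) D(2) by (simp add: field_simps)
  have e4: "(1 + x) * a1 / (2 * K) - a1 * (2 * d - D) * (1 - x) / (2 * D * K)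
     = a1 * ((1 + x) * D - (2 * d - D) * (1 - x)) / (2 * D * K)"
    using assms(1,2) D(2) by (simp add: field_simps)
  have e5: "(1 + x) * D - (2 * d - D) * (1 - x) = 2 * P * l" unfolding D(1) by (simp add: algebra_simps)
  show ?thesis unfolding e1 e2 e3 e4 e5 using assms by (simp add: field_simps)
qed


theorem lemma5p4:
  fixes n :: nat and z :: real
  assumes n2: "n \<ge> 2"
    and z_zero: "L n z = 0" and z_range: "-1 < z \<and> z < 1"
    and z_largest: "\<forall>y. -1 < y \<and> y < 1 \<and> L n y = 0 \<longrightarrow> y \<le> z"
  shows "(\<forall>x y. z \<le> x \<and> x < y \<and> y < 1 \<longrightarrow>
            acoef (n * (n + 1)) n y < acoef (n * (n + 1)) n x)
       \<and> (\<forall>x. z \<le> x \<and> x < 1 \<longrightarrow>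
            acoef (n * (n + 1)) n x * L n x
              = hc (n * (n + 1)) (root (n * (n + 1)) (beta (n * (n + 1)) n x)) x
          \<and> (hc (n * (n + 1)) (root (n * (n + 1)) (beta (n * (n + 1)) n x))
               has_real_derivative (acoef (n * (n + 1)) n x * Ld n x)) (at x))
       \<and> (acoef (n * (n + 1)) n \<longlongrightarrow> 1) (at_left 1)"
proof -
  define p where "p = n * (n + 1)"
  define P where "P = real p"
  have p2: "p \<ge> 2" unfolding p_def using mult_le_mono[of 1 n 2 "n + 1"] n2 by simp
  have P2: "P \<ge> 2" unfolding P_def using p2 by simp
  define L2 where "L2 x = poly (pderiv (pderiv (legendre n))) x" for x
  from legendre_facts[OF n2 z_zero z_range z_largest]
  have Lpos: "\<And>x. x > z \<Longrightarrow> L n x > 0" and Ldpos: "\<And>x. x \<ge> z \<Longrightarrow> Ld n x > 0"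
    and L2pos: "\<And>x. x \<ge> z \<Longrightarrow> L2 x > 0"
    and Gpos: "\<And>x. z \<le> x \<Longrightarrow> x < 1 \<Longrightarrow> (1 + x) * Ld n x - P * L n x > 0"
    unfolding L2_def P_def p_def by auto
  have ode: "(x^2 - 1) * L2 x + 2 * x * Ld n x - P * L n x = 0" for x
    using legendre_ode[of x n] unfolding L2_def P_def p_def by simp
  have L1: "L n 1 = 1" by (rule legendre_one)
  have Lnn: "L n x \<ge> 0" if "x \<ge> z" for x
    using Lpos[of x] z_zero that by (cases "x = z") auto
  have derL: "DERIV (L n) x :> Ld n x" for x unfolding L_def Ld_def by simp
  have derLd: "DERIV (Ld n) x :> L2 x" for x unfolding L2_def Ld_def by simp
  define Den where "Den x = (1 - x) * Ld n x + P * L n x" for x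
  have Denpos: "Den x > 0" if "z \<le> x" "x < 1" for x
  proof -
    have "(1 - x) * Ld n x > 0" using that Ldpos by simp
    moreover have "P * L n x \<ge> 0" using Lnn that P2 by simp
    ultimately show ?thesis unfolding Den_def by simp
  qed
  define A where "A x = P * ((1 + x) / 2) ^ (p - 1) / Den x" for x

  have acoefA: "acoef p n x = A x" if "z \<le> x" "x < 1" for x
  proof -
    have pe1: "(1 + x) ^ p = (1 + x) * (1 + x) ^ (p - 1)" using p2 by (cases p) auto
    have pe2: "(1 - x) ^ p = (1 - x) * (1 - x) ^ (p - 1)" using p2 by (cases p) auto
    have b1: "(1 - x) ^ (p - 1) \<noteq> 0" using that by simp
    have "acoef p n x = P / 2 * ((1 + x) ^ (p - 1) / 2 ^ (p - 1) +
        ((1 + x) * (1 + x) ^ (p - 1) * Ld n x - P * (1 + x) ^ (p - 1) * L n x) /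
        ((1 - x) * (1 - x) ^ (p - 1) * Ld n x + P * (1 - x) ^ (p - 1) * L n x) * ((1 - x) ^ (p - 1) / 2 ^ (p - 1))) / Ld n x"
      unfolding acoef_def beta_def pe1 pe2 P_def by (simp add: power_divide)
    also have "\<dots> = P * ((1 + x) ^ (p - 1) / 2 ^ (p - 1)) / Den x"
      by (rule alg1) (use b1 Ldpos[of x] that Denpos[of x] in \<open>auto simp: Den_def\<close>)
    also have "\<dots> = A x" unfolding A_def by (simp add: power_divide)
    finally show ?thesis .
  qed

  have betanonneg: "beta p n x \<ge> 0" if "z \<le> x" "x < 1" for x
  proof -
    have pe1: "(1 + x) ^ p = (1 + x) * (1 + x) ^ (p - 1)" using p2 by (cases p) auto
    have pe2: "(1 - x) ^ p = (1 - x) * (1 - x) ^ (p - 1)" using p2 by (cases p) auto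
    have "beta p n x = ((1 + x) ^ (p - 1) * ((1 + x) * Ld n x - P * L n x)) / ((1 - x) ^ (p - 1) * Den x)"
      unfolding beta_def pe1 pe2 Den_def P_def by (simp add: algebra_simps)
    moreover have "(1 + x) ^ (p - 1) * ((1 + x) * Ld n x - P * L n x) \<ge> 0"
      using Gpos[of x] that z_range by simp
    moreover have "(1 - x) ^ (p - 1) * Den x > 0" using Denpos[of x] that by simp
    ultimately show ?thesis by simp
  qed

  have part2: "acoef p n x * L n x = hc p (root p (beta p n x)) x
          \<and> (hc p (root p (beta p n x)) has_real_derivative (acoef p n x * Ld n x)) (at x)"
    if "z \<le> x" "x < 1" for x
  proof -
    have rp: "root p (beta p n x) ^ p = beta p n x" using betanonneg[OF that] p2 by simp
    have pe1: "(1 + x) ^ p = (1 + x) * (1 + x) ^ (p - 1)" using p2 by (cases p) auto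
    have pe2: "(1 - x) ^ p = (1 - x) * (1 - x) ^ (p - 1)" using p2 by (cases p) auto
    have pe3: "(2::real) ^ p = 2 * 2 ^ (p - 1)" using p2 by (cases p) auto
    have b1: "(1 - x) ^ (p - 1) \<noteq> 0" using that by simp
    have "hc p (root p (beta p n x)) x = (1 + x) * (1 + x) ^ (p - 1) / (2 * 2 ^ (p - 1)) -
        ((1 + x) * (1 + x) ^ (p - 1) * Ld n x - P * (1 + x) ^ (p - 1) * L n x) /
        ((1 - x) * (1 - x) ^ (p - 1) * Ld n x + P * (1 - x) ^ (p - 1) * L n x) * ((1 - x) * (1 - x) ^ (p - 1) / (2 * 2 ^ (p - 1)))"
      unfolding hc_def rp unfolding beta_def power_divide pe1 pe2 pe3 P_def by simp
    also have "\<dots> = P * ((1 + x) ^ (p - 1) / 2 ^ (p - 1)) / Den x * L n x"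
      by (rule alg2) (use b1 that Denpos[of x] in \<open>auto simp: Den_def\<close>)
    also have "\<dots> = acoef p n x * L n x" using acoefA[OF that] unfolding A_def by (simp add: power_divide)
    finally have v: "acoef p n x * L n x = hc p (root p (beta p n x)) x" by simp
    have "(hc p (root p (beta p n x)) has_real_derivative
        (P * ((1 + x) / 2) ^ (p - 1) * (1 / 2) - beta p n x * (P * ((1 - x) / 2) ^ (p - 1) * (- 1 / 2)))) (at x)"
      unfolding hc_def rp P_def by (auto intro!: derivative_eq_intros)
    moreover have "acoef p n x * Ld n x = P * ((1 + x) / 2) ^ (p - 1) * (1 / 2) - beta p n x * (P * ((1 - x) / 2) ^ (p - 1) * (- 1 / 2))"
      unfolding acoef_def P_def using Ldpos[of x] that by (simp add: field_simps)
    ultimately show ?thesis using v by simp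
  qed
  have Aneg: "\<exists>D. DERIV A w :> D \<and> D < 0" if "z \<le> w" "w < 1" for w
  proof -
    define h where "h = (1 + w) / 2"
    define hq where "hq = h ^ (p - 1 - 1)"
    define N' where "N' = P * (real (p - 1) * h ^ (p - 1 - 1) * (1 / 2))"
    define Den' where "Den' = - Ld n w + (1 - w) * L2 w + P * Ld n w"
    have dN: "DERIV (\<lambda>w. P * ((1 + w) / 2) ^ (p - 1)) w :> N'"
      unfolding N'_def h_def by (auto intro!: derivative_eq_intros)
    have dD: "DERIV Den w :> Den'"
      unfolding Den_def Den'_def by (auto intro!: derivative_eq_intros derL derLd)
    have Dw: "Den w \<noteq> 0" using Denpos[OF that] by simp
    have dA: "DERIV A w :> (N' * Den w - P * ((1 + w) / 2) ^ (p - 1) * Den') / (Den w * Den w)"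
      unfolding A_def using DERIV_divide[OF dN dD Dw] by simp
    obtain k where k: "p - 1 = Suc k" using p2 by (cases "p - 1") auto
    have hpow: "h ^ (p - 1) = h * hq" unfolding hq_def k by simp
    have rp1: "real (p - 1) = P - 1" using p2 unfolding P_def by (simp add: of_nat_diff)
    have key0: "(P - 1) * Den w - (1 + w) * Den' + P * (1 - w^2) * L2 w
        = -(P - 1) * ((w^2 - 1) * L2 w + 2 * w * Ld n w - P * L n w)"
      unfolding Den_def Den'_def by (simp add: algebra_simps power2_eq_square)
    have key: "(P - 1) * Den w - (1 + w) * Den' = - P * (1 - w^2) * L2 w"
      using key0 ode[of w] by simp
    have num: "N' * Den w - P * ((1 + w) / 2) ^ (p - 1) * Den' = P * hq / 2 * ((P - 1) * Den w - (1 + w) * Den')"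
      unfolding N'_def h_def[symmetric] hpow rp1 hq_def[symmetric] unfolding h_def by (simp add: field_simps)
    have hq0: "hq > 0" unfolding hq_def h_def using that z_range by simp
    have w2: "1 - w^2 > 0" using that z_range by (simp add: abs_square_less_1)
    have "P * hq / 2 * (P * (1 - w^2) * L2 w) > 0"
      using hq0 w2 L2pos[of w] that P2 by simp
    then have "N' * Den w - P * ((1 + w) / 2) ^ (p - 1) * Den' < 0" unfolding num key by simp
    moreover have "Den w * Den w > 0" using Denpos[OF that] by simp
    ultimately show ?thesis using dA by (intro exI[of _ "(N' * Den w - P * ((1 + w) / 2) ^ (p - 1) * Den') / (Den w * Den w)"])
      (simp add: divide_neg_pos)
  qed
  have part1: "acoef p n y < acoef p n x" if "z \<le> x" "x < y" "y < 1" for x y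
  proof -
    have "A y < A x"
      by (rule DERIV_neg_imp_decreasing[OF \<open>x < y\<close>]) (use Aneg that in auto)
    then show ?thesis using acoefA that by simp
  qed
  have lim: "(acoef p n \<longlongrightarrow> 1) (at_left 1)"
  proof -
    have cL: "isCont (L n) 1" using derL by (rule DERIV_isCont)
    have cLd: "isCont (Ld n) 1" using derLd by (rule DERIV_isCont)
    have D1: "Den 1 = P" unfolding Den_def using L1 by simp
    have "isCont A 1" unfolding A_def Den_def
      using cL cLd D1 P2 unfolding Den_def by (intro continuous_intros) auto
    moreover have "A 1 = 1" unfolding A_def using D1 P2 by simp
    ultimately have "(A \<longlongrightarrow> 1) (at 1)" unfolding isCont_def by simp
    then have "(A \<longlongrightarrow> 1) (at_left 1)" by (rule tendsto_mono[OF at_le[OF subset_UNIV]])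
    moreover have "eventually (\<lambda>x. A x = acoef p n x) (at_left 1)"
    proof -
      have "eventually (\<lambda>x. x \<in> {z<..<1}) (at_left (1::real))"
        using eventually_at_left_real[of z 1] z_range by simp
      then show ?thesis by (rule eventually_mono) (use acoefA in auto)
    qed
    ultimately show ?thesis by (rule Lim_transform_eventually)
  qed
  show ?thesis unfolding p_def[symmetric] using part1 part2 lim by blast
qed

end
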